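(* Let $(H,wt)$ be a weighted graph. For each $a\in V(H)$ take a copy of $C_{wt(a)}$ and fix a vertex $v(a)$ of it, and let $G$ be the disjoint union of these copies together with a dashed edge $v(a)\dashrightarrow v(b)$ for each edge $ab\in E(H)$. Then $X_{(H,wt)}(x)=\mathscr{X}_G(x)$.
   Context: A weighted graph is a finite simple graph $H$ with $wt:V(H)\to\mathbb{P}$; its extended chromatic symmetric function is $X_{(H,wt)}(x)=\sum_\kappa\prod_{a\in V(H)}x_{\kappa(a)}^{wt(a)}$ over proper colourings $\kappa:V(H)\to\mathbb{P}$ of $H$ (adjacent vertices get different colours). $C_m$ is the directed cycle on $m$ vertices all of whose edges are double (for $m=1$ a single vertex with no edges). An edge-coloured digraph is a finite simple digraph with each edge dashed ($\dashrightarrow$), solid ($\rightarrow$) or double ($\Rightarrow$); its proper vertex-colourings are $\kappa:V\to\mathbb{P}$ with $\kappa(a)\ne\kappa(b)$, $\kappa(a)<\kappa(b)$, $\kappa(a)\le\kappa(b)$ for dashed, solid, double edges $(a,b)$ respectively, and $\mathscr{X}_G(x)=\sum_\kappa\prod_{a}x_{\kappa(a)}$ over them. *)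

theory Defs
  imports "HOL-Library.FuncSet"
begin

text \<open>Symmetric functions in variables x_1, x_2, ... (colours are positive integers) are
represented by their coefficient function: a monomial is an exponent vector
m :: nat \<Rightarrow> nat (m i = exponent of x_i), and the series is the map from monomials to
coefficients.\<close>

definition weighted_graph :: "'a set \<Rightarrow> 'a set set \<Rightarrow> ('a \<Rightarrow> nat) \<Rightarrow> bool" where
  "weighted_graph V E wt \<longleftrightarrow> finite V \<and>
     (\<forall>e\<in>E. \<exists>a b. e = {a, b} \<and> a \<noteq> b \<and> a \<in> V \<and> b \<in> V) \<and>
     (\<forall>a\<in>V. 1 \<le> wt a)"

definition proper_colourings :: "'a set \<Rightarrow> 'a set set \<Rightarrow> ('a \<Rightarrow> nat) set" where
  "proper_colourings V E =
     {\<kappa> \<in> V \<rightarrow>\<^sub>E {1..}. \<forall>a b. {a, b} \<in> E \<longrightarrow> \<kappa> a \<noteq> \<kappa> b}"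

text \<open>Exponent vector of the monomial prod_{a in V} x_{kappa a}^{wt a}.\<close>
definition wmono :: "'a set \<Rightarrow> ('a \<Rightarrow> nat) \<Rightarrow> ('a \<Rightarrow> nat) \<Rightarrow> (nat \<Rightarrow> nat)" where
  "wmono V wt \<kappa> = (\<lambda>i. \<Sum>a\<in>{a\<in>V. \<kappa> a = i}. wt a)"

definition XH :: "'a set \<Rightarrow> 'a set set \<Rightarrow> ('a \<Rightarrow> nat) \<Rightarrow> (nat \<Rightarrow> nat) \<Rightarrow> nat" where
  "XH V E wt = (\<lambda>m. card {\<kappa> \<in> proper_colourings V E. wmono V wt \<kappa> = m})"

text \<open>Edge-coloured digraph: vertex set W, dashed edges Da, solid edges So, double edges Do.\<close>
definition ecd_colourings ::
  "'v set \<Rightarrow> ('v \<times> 'v) set \<Rightarrow> ('v \<times> 'v) set \<Rightarrow> ('v \<times> 'v) set \<Rightarrow> ('v \<Rightarrow> nat) set" where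
  "ecd_colourings W Da So Do =
     {\<kappa> \<in> W \<rightarrow>\<^sub>E {1..}. (\<forall>(a, b)\<in>Da. \<kappa> a \<noteq> \<kappa> b) \<and> (\<forall>(a, b)\<in>So. \<kappa> a < \<kappa> b)
        \<and> (\<forall>(a, b)\<in>Do. \<kappa> a \<le> \<kappa> b)}"

definition XG ::
  "'v set \<Rightarrow> ('v \<times> 'v) set \<Rightarrow> ('v \<times> 'v) set \<Rightarrow> ('v \<times> 'v) set \<Rightarrow> (nat \<Rightarrow> nat) \<Rightarrow> nat" where
  "XG W Da So Do = (\<lambda>m. card {\<kappa> \<in> ecd_colourings W Da So Do. wmono W (\<lambda>_. 1) \<kappa> = m})"

text \<open>Construction of G: the copy of C_{wt a} has vertices (a,0),...,(a,wt a - 1) and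
double edges (a,i) => (a,(i+1) mod wt a) (none if wt a = 1).\<close>
definition cycV :: "'a set \<Rightarrow> ('a \<Rightarrow> nat) \<Rightarrow> ('a \<times> nat) set" where
  "cycV V wt = {(a, i). a \<in> V \<and> i < wt a}"

definition cycDo :: "'a set \<Rightarrow> ('a \<Rightarrow> nat) \<Rightarrow> (('a \<times> nat) \<times> ('a \<times> nat)) set" where
  "cycDo V wt = {((a, i), (a, Suc i mod wt a)) | a i. a \<in> V \<and> i < wt a \<and> 2 \<le> wt a}"

definition dashE :: "'a set set \<Rightarrow> ('a \<Rightarrow> nat) \<Rightarrow> ('a \<Rightarrow> 'a \<Rightarrow> bool)
    \<Rightarrow> (('a \<times> nat) \<times> ('a \<times> nat)) set" where
  "dashE E v ori = {((a, v a), (b, v b)) | a b. {a, b} \<in> E \<and> ori a b}"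

end

theory Submission
  imports Defs
begin

lemma cyc_const_aux:
  assumes mu: "\<mu> \<in> ecd_colourings W D S (cycDo V wt)" and a: "a \<in> V"
  shows "i < wt a \<Longrightarrow> \<mu> (a,0) \<le> \<mu> (a,i)"
proof (induction i)
  case 0 then show ?case by simp
next
  case (Suc i)
  have "((a,i),(a, Suc i mod wt a)) \<in> cycDo V wt"
    using Suc.prems a unfolding cycDo_def by auto
  hence "\<mu> (a,i) \<le> \<mu> (a, Suc i mod wt a)" using mu unfolding ecd_colourings_def by auto
  moreover have "Suc i mod wt a = Suc i" using Suc.prems by simp
  ultimately show ?case using Suc by simp
qed

lemma cyc_const:
  assumes mu: "\<mu> \<in> ecd_colourings W D S (cycDo V wt)" and a: "a \<in> V" and i: "i < wt a"
  shows "\<mu> (a,i) = \<mu> (a,0)"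
proof (cases "2 \<le> wt a")
  case True
  have top: "\<mu> (a,i) \<le> \<mu> (a, wt a - 1)"
  proof -
    have "\<And>k. i + k < wt a \<Longrightarrow> \<mu> (a,i) \<le> \<mu> (a,i+k)"
    proof -
      fix k show "i + k < wt a \<Longrightarrow> \<mu> (a,i) \<le> \<mu> (a,i+k)"
      proof (induction k)
        case 0 then show ?case by simp
      next
        case (Suc k)
        have "((a,i+k),(a, Suc (i+k) mod wt a)) \<in> cycDo V wt"
          using Suc.prems a True unfolding cycDo_def by auto
        hence "\<mu> (a,i+k) \<le> \<mu> (a, Suc (i+k) mod wt a)" using mu unfolding ecd_colourings_def by auto
        moreover have "Suc (i+k) mod wt a = i + Suc k" using Suc.prems by simp
        ultimately show ?case using Suc by simp
      qed
    qed
    from this[of "wt a - 1 - i"] i show ?thesis by simp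
  qed
  have "((a,wt a - 1),(a, Suc (wt a - 1) mod wt a)) \<in> cycDo V wt"
    using a True unfolding cycDo_def by auto
  hence "\<mu> (a,wt a - 1) \<le> \<mu> (a, Suc (wt a - 1) mod wt a)" using mu unfolding ecd_colourings_def by auto
  moreover have "Suc (wt a - 1) mod wt a = 0" using True by simp
  ultimately have "\<mu> (a,i) \<le> \<mu> (a,0)" using top by simp
  moreover have "\<mu> (a,0) \<le> \<mu> (a,i)" using cyc_const_aux[OF mu a i] .
  ultimately show ?thesis by simp
next
  case False
  then show ?thesis using i by (cases i) auto
qed

lemma wmono_lift:
  assumes fin: "finite V"
  shows "wmono (cycV V wt) (\<lambda>_. 1) (restrict (\<lambda>p. \<kappa> (fst p)) (cycV V wt)) = wmono V wt \<kappa>"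
proof
  fix n
  have eq: "{p \<in> cycV V wt. restrict (\<lambda>p. \<kappa> (fst p)) (cycV V wt) p = n}
        = Sigma {a\<in>V. \<kappa> a = n} (\<lambda>a. {..<wt a})"
    unfolding cycV_def by auto
  have "wmono (cycV V wt) (\<lambda>_. 1) (restrict (\<lambda>p. \<kappa> (fst p)) (cycV V wt)) n
      = card (Sigma {a\<in>V. \<kappa> a = n} (\<lambda>a. {..<wt a}))"
    unfolding wmono_def eq by simp
  also have "\<dots> = (\<Sum>a\<in>{a\<in>V. \<kappa> a = n}. wt a)"
    using fin by (subst card_SigmaI) auto
  finally show "wmono (cycV V wt) (\<lambda>_. 1) (restrict (\<lambda>p. \<kappa> (fst p)) (cycV V wt)) n = wmono V wt \<kappa> n"
    unfolding wmono_def by simp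
qed

theorem mainTheorem13:
  fixes V :: "'a set" and E :: "'a set set" and wt :: "'a \<Rightarrow> nat"
    and v :: "'a \<Rightarrow> nat" and ori :: "'a \<Rightarrow> 'a \<Rightarrow> bool"
  assumes "weighted_graph V E wt"
    and "\<forall>a\<in>V. v a < wt a"
    and "\<forall>a b. {a, b} \<in> E \<longrightarrow> (ori a b \<longleftrightarrow> \<not> ori b a)"
  shows "XH V E wt = XG (cycV V wt) (dashE E v ori) {} (cycDo V wt)"
proof
  fix m
  have fin: "finite V" and Ed: "\<And>e. e \<in> E \<Longrightarrow> \<exists>a b. e = {a, b} \<and> a \<noteq> b \<and> a \<in> V \<and> b \<in> V"
    and w1: "\<And>a. a \<in> V \<Longrightarrow> 1 \<le> wt a"
    using assms(1) unfolding weighted_graph_def by auto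
  have EV: "\<And>a b. {a,b} \<in> E \<Longrightarrow> a \<in> V \<and> b \<in> V"
    using Ed by (metis doubleton_eq_iff)
  define W where "W = cycV V wt"
  define f where "f = (\<lambda>\<kappa>::'a\<Rightarrow>nat. restrict (\<lambda>p. \<kappa> (fst p)) W)"
  define g where "g = (\<lambda>\<mu>::'a\<times>nat\<Rightarrow>nat. restrict (\<lambda>a. \<mu> (a,0)) V)"
  define A where "A = {\<kappa> \<in> proper_colourings V E. wmono V wt \<kappa> = m}"
  define B where "B = {\<mu> \<in> ecd_colourings W (dashE E v ori) {} (cycDo V wt). wmono W (\<lambda>_. 1) \<mu> = m}"
  have inW: "\<And>a i. a \<in> V \<Longrightarrow> i < wt a \<Longrightarrow> (a,i) \<in> W" unfolding W_def cycV_def by auto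
  have bij: "bij_betw f A B"
  proof (rule bij_betw_byWitness[where f'=g])
    show "\<forall>\<kappa>\<in>A. g (f \<kappa>) = \<kappa>"
    proof
      fix \<kappa> assume "\<kappa> \<in> A"
      hence ext: "\<kappa> \<in> extensional V" unfolding A_def proper_colourings_def PiE_def by auto
      show "g (f \<kappa>) = \<kappa>"
      proof
        fix a show "g (f \<kappa>) a = \<kappa> a"
          using ext inW[of a 0] w1[of a] unfolding g_def f_def
          by (cases "a \<in> V") (auto simp: extensional_def)
      qed
    qed
    show "\<forall>\<mu>\<in>B. f (g \<mu>) = \<mu>"
    proof
      fix \<mu> assume mB: "\<mu> \<in> B"
      hence mu: "\<mu> \<in> ecd_colourings W (dashE E v ori) {} (cycDo V wt)" unfolding B_def by auto
      hence ext: "\<mu> \<in> extensional W" unfolding ecd_colourings_def PiE_def by auto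
      show "f (g \<mu>) = \<mu>"
      proof
        fix p show "f (g \<mu>) p = \<mu> p"
        proof (cases "p \<in> W")
          case True
          then obtain a i where p: "p = (a,i)" "a \<in> V" "i < wt a" unfolding W_def cycV_def by auto
          show ?thesis using cyc_const[OF mu p(2,3)] p True unfolding f_def g_def by simp
        next
          case False then show ?thesis using ext unfolding f_def by (cases p) (auto simp: extensional_def)
        qed
      qed
    qed
    show "f ` A \<subseteq> B"
    proof
      fix \<mu> assume "\<mu> \<in> f ` A"
      then obtain \<kappa> where k: "\<kappa> \<in> A" and mu: "\<mu> = f \<kappa>" by auto
      have kp: "\<kappa> \<in> V \<rightarrow>\<^sub>E {1..}" and kE: "\<And>a b. {a,b} \<in> E \<Longrightarrow> \<kappa> a \<noteq> \<kappa> b"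
        and km: "wmono V wt \<kappa> = m"
        using k unfolding A_def proper_colourings_def by auto
      have "\<mu> \<in> W \<rightarrow>\<^sub>E {1..}" using kp unfolding mu f_def W_def cycV_def by auto
      moreover have "\<forall>(p, q)\<in>dashE E v ori. \<mu> p \<noteq> \<mu> q"
      proof (clarify)
        fix p q assume "(p,q) \<in> dashE E v ori" "\<mu> p = \<mu> q"
        then obtain a b where pq: "p = (a, v a)" "q = (b, v b)" "{a,b} \<in> E" unfolding dashE_def by auto
        with EV have "a \<in> V" "b \<in> V" by auto
        with pq assms(2) inW have "p \<in> W" "q \<in> W" by auto
        with \<open>\<mu> p = \<mu> q\<close> have "\<kappa> a = \<kappa> b" using pq unfolding mu f_def by simp
        with kE pq show False by auto
      qed
      moreover have "\<forall>(p, q)\<in>cycDo V wt. \<mu> p \<le> \<mu> q"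
        unfolding mu f_def W_def cycDo_def cycV_def by auto
      moreover have "wmono W (\<lambda>_. 1) \<mu> = m"
        using wmono_lift[OF fin] km unfolding mu f_def W_def by simp
      ultimately show "\<mu> \<in> B" unfolding B_def ecd_colourings_def by auto
    qed
    show "g ` B \<subseteq> A"
    proof
      fix \<kappa> assume "\<kappa> \<in> g ` B"
      then obtain \<mu> where mB: "\<mu> \<in> B" and k: "\<kappa> = g \<mu>" by auto
      have mu: "\<mu> \<in> ecd_colourings W (dashE E v ori) {} (cycDo V wt)"
        and mm: "wmono W (\<lambda>_. 1) \<mu> = m" using mB unfolding B_def by auto
      have mp: "\<mu> \<in> W \<rightarrow>\<^sub>E {1..}" and mD: "\<forall>(p, q)\<in>dashE E v ori. \<mu> p \<noteq> \<mu> q"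
        using mu unfolding ecd_colourings_def by auto
      have "\<kappa> \<in> V \<rightarrow>\<^sub>E {1..}" using mp inW w1 unfolding k g_def by fastforce
      moreover have "\<forall>a b. {a, b} \<in> E \<longrightarrow> \<kappa> a \<noteq> \<kappa> b"
      proof (intro allI impI)
        fix a b assume e: "{a,b} \<in> E"
        with EV have ab: "a \<in> V" "b \<in> V" by auto
        have ca: "\<mu> (a, v a) = \<mu> (a,0)" using cyc_const[OF mu ab(1)] assms(2) ab by auto
        have cb: "\<mu> (b, v b) = \<mu> (b,0)" using cyc_const[OF mu ab(2)] assms(2) ab by auto
        have "ori a b \<or> ori b a" using assms(3) e by blast
        moreover have "{b,a} \<in> E" using e by (simp add: insert_commute)
        ultimately have "\<mu> (a, v a) \<noteq> \<mu> (b, v b)"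
          using mD e unfolding dashE_def by fastforce
        then show "\<kappa> a \<noteq> \<kappa> b" using ca cb ab unfolding k g_def by simp
      qed
      moreover have "f \<kappa> = \<mu>"
      proof
        fix p show "f \<kappa> p = \<mu> p"
        proof (cases "p \<in> W")
          case True
          then obtain a i where p: "p = (a,i)" "a \<in> V" "i < wt a" unfolding W_def cycV_def by auto
          show ?thesis using cyc_const[OF mu p(2,3)] p True unfolding f_def k g_def by simp
        next
          case False then show ?thesis using mp unfolding f_def by (cases p) (auto simp: PiE_def extensional_def)
        qed
      qed
      hence "wmono V wt \<kappa> = m" using wmono_lift[OF fin, of wt \<kappa>] mm unfolding f_def W_def by simp
      ultimately show "\<kappa> \<in> A" unfolding A_def proper_colourings_def by auto
    qed
  qed
  show "XH V E wt m = XG (cycV V wt) (dashE E v ori) {} (cycDo V wt) m"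
    unfolding XH_def XG_def using bij_betw_same_card[OF bij] unfolding A_def B_def W_def by simp
qed

end
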